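(* Let $\mathbb{F}=\mathbb{R}$ or $\mathbb{C}$ and let $\{\mathcal{W}_i\}_{i=1}^n$ be a collection of $m$-dimensional subspaces of $\mathbb{F}^k$. Consider the collection of orthogonal complements $\{\mathcal{W}_i^\perp\}_{i=1}^n$, which are $(k-m)$-dimensional subspaces of $\mathbb{F}^k$. Then: (1) $\{\mathcal{W}_i\}_{i=1}^n$ is a tight fusion frame if and only if $\{\mathcal{W}_i^\perp\}_{i=1}^n$ is a tight fusion frame; (2) $\{\mathcal{W}_i\}_{i=1}^n$ is an equichordal tight fusion frame if and only if $\{\mathcal{W}_i^\perp\}_{i=1}^n$ is an equichordal tight fusion frame; (3) $\{\mathcal{W}_i\}_{i=1}^n$ is a strongly simplicial tight fusion frame if and only if $\{\mathcal{W}_i^\perp\}_{i=1}^n$ is a strongly simplicial tight fusion frame; (4) $\{\mathcal{W}_i\}_{i=1}^n$ is an orthoplectic Grassmannian packing if and only if $\{\mathcal{W}_i^\perp\}_{i=1}^n$ is an orthoplectic Grassmannian packing.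
   Context: For $d$-dimensional subspaces $\{\mathcal{V}_i\}_{i=1}^n$ of $\mathbb{F}^k$ let $L_i$ be a matrix whose columns form an orthonormal basis of $\mathcal{V}_i$ and $P_i=L_iL_i^*$. Chordal distance: $d_c(\mathcal{V}_i,\mathcal{V}_j)=[d-\operatorname{trace}(P_iP_j)]^{1/2}$. The collection is a tight fusion frame if $\sum_iP_i=AI_k$ for some $A>0$; equichordal if $\operatorname{trace}(L_i^*L_jL_j^*L_i)$ is the same for all $i\ne j$; strongly simplicial if $L_i^*L_jL_j^*L_i$ has the same set of eigenvalues for all $i\ne j$. Let $\mathcal{Z}(\mathbb{C},k)=k^2$, $\mathcal{Z}(\mathbb{R},k)=k(k+1)/2$. The collection is an orthoplectic Grassmannian packing if $\mathcal{Z}(\mathbb{F},k)<n\le 2(\mathcal{Z}(\mathbb{F},k)-1)$ and $\min_{i\ne j}d_c^2(\mathcal{V}_i,\mathcal{V}_j)=d(k-d)/k$. *)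

theory Defs
  imports "Jordan_Normal_Form.Jordan_Normal_Form" "Jordan_Normal_Form.Schur_Decomposition"
begin

definition mat_trace :: "'a :: comm_ring_1 mat \<Rightarrow> 'a" where
  "mat_trace A = (\<Sum>i<dim_row A. A $$ (i, i))"

(* Subspaces of F^k are sets of vectors in carrier_vec k; F = real or complex. *)
definition onb_mat :: "nat \<Rightarrow> nat \<Rightarrow> 'a :: conjugatable_field vec set \<Rightarrow> 'a mat \<Rightarrow> bool" where
  "onb_mat k d W L \<longleftrightarrow> L \<in> carrier_mat k d \<and> mat_adjoint L * L = 1\<^sub>m d
      \<and> W = {L *\<^sub>v x | x. x \<in> carrier_vec d}"

definition subspace_dim :: "nat \<Rightarrow> nat \<Rightarrow> 'a :: conjugatable_field vec set \<Rightarrow> bool" where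
  "subspace_dim k d W \<longleftrightarrow> (\<exists>L. onb_mat k d W L)"

definition basis_mat :: "nat \<Rightarrow> nat \<Rightarrow> 'a :: conjugatable_field vec set \<Rightarrow> 'a mat" where
  "basis_mat k d W = (SOME L. onb_mat k d W L)"

definition proj_mat :: "nat \<Rightarrow> nat \<Rightarrow> 'a :: conjugatable_field vec set \<Rightarrow> 'a mat" where
  "proj_mat k d W = basis_mat k d W * mat_adjoint (basis_mat k d W)"

definition perp :: "nat \<Rightarrow> 'a :: conjugatable_field vec set \<Rightarrow> 'a vec set" where
  "perp k W = {v \<in> carrier_vec k. \<forall>w\<in>W. v \<bullet>c w = 0}"

definition cross_mat :: "nat \<Rightarrow> nat \<Rightarrow> 'a :: conjugatable_field vec set \<Rightarrow> 'a vec set \<Rightarrow> 'a mat" where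
  "cross_mat k d V U = mat_adjoint (basis_mat k d V) * basis_mat k d U
       * mat_adjoint (basis_mat k d U) * basis_mat k d V"

(* squared chordal distance d_c^2 = d - trace(P_i P_j) (real-valued; an element of F) *)
definition chordal_sq :: "nat \<Rightarrow> nat \<Rightarrow> 'a :: conjugatable_field vec set \<Rightarrow> 'a vec set \<Rightarrow> 'a" where
  "chordal_sq k d V U = of_nat d - mat_trace (proj_mat k d V * proj_mat k d U)"

(* sum_{i=1}^n P_i = A I_k for some A > 0 (for F = complex, 0 < A means A is a positive real) *)
definition tight_fusion_frame :: "nat \<Rightarrow> nat \<Rightarrow> nat \<Rightarrow> (nat \<Rightarrow> 'a :: conjugatable_ordered_field vec set) \<Rightarrow> bool" where
  "tight_fusion_frame k d n W \<longleftrightarrow>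
     (\<exists>A. 0 < A \<and> mat k k (\<lambda>(a,b). \<Sum>i\<in>{1..n}. proj_mat k d (W i) $$ (a,b)) = A \<cdot>\<^sub>m 1\<^sub>m k)"

definition equichordal :: "nat \<Rightarrow> nat \<Rightarrow> nat \<Rightarrow> (nat \<Rightarrow> 'a :: conjugatable_field vec set) \<Rightarrow> bool" where
  "equichordal k d n W \<longleftrightarrow>
     (\<exists>c. \<forall>i\<in>{1..n}. \<forall>j\<in>{1..n}. i \<noteq> j \<longrightarrow> mat_trace (cross_mat k d (W i) (W j)) = c)"

definition same_eigenvalues :: "'a :: field mat \<Rightarrow> 'a mat \<Rightarrow> bool" where
  "same_eigenvalues A B \<longleftrightarrow> (\<forall>e. Polynomial.order e (char_poly A) = Polynomial.order e (char_poly B))"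

definition strongly_simplicial :: "nat \<Rightarrow> nat \<Rightarrow> nat \<Rightarrow> (nat \<Rightarrow> 'a :: conjugatable_field vec set) \<Rightarrow> bool" where
  "strongly_simplicial k d n W \<longleftrightarrow>
     (\<forall>i\<in>{1..n}. \<forall>j\<in>{1..n}. \<forall>i'\<in>{1..n}. \<forall>j'\<in>{1..n}. i \<noteq> j \<longrightarrow> i' \<noteq> j' \<longrightarrow>
        same_eigenvalues (cross_mat k d (W i) (W j)) (cross_mat k d (W i') (W j')))"

(* Z = Z(F,k) is passed explicitly: k^2 for complex, k(k+1)/2 for real.
   min_{i<>j} d_c^2 = d(k-d)/k is stated as: attained by some pair and a lower bound for all pairs. *)
definition orthoplectic_packing :: "nat \<Rightarrow> nat \<Rightarrow> nat \<Rightarrow> nat \<Rightarrow> (nat \<Rightarrow> 'a :: conjugatable_ordered_field vec set) \<Rightarrow> bool" where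
  "orthoplectic_packing Z k d n W \<longleftrightarrow> Z < n \<and> n \<le> 2 * (Z - 1) \<and>
     (let c = (of_nat (d * (k - d)) / of_nat k :: 'a) in
       (\<forall>i\<in>{1..n}. \<forall>j\<in>{1..n}. i \<noteq> j \<longrightarrow> c \<le> chordal_sq k d (W i) (W j)) \<and>
       (\<exists>i\<in>{1..n}. \<exists>j\<in>{1..n}. i \<noteq> j \<and> chordal_sq k d (W i) (W j) = c))"

definition complement_duality :: "nat \<Rightarrow> nat \<Rightarrow> nat \<Rightarrow> nat \<Rightarrow> (nat \<Rightarrow> 'a :: conjugatable_ordered_field vec set) \<Rightarrow> bool" where
  "complement_duality Z k m n W \<longleftrightarrow>
     (let W' = (\<lambda>i. perp k (W i)) in
      (\<forall>i\<in>{1..n}. subspace_dim k (k - m) (W' i)) \<and>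
      (tight_fusion_frame k m n W \<longleftrightarrow> tight_fusion_frame k (k - m) n W') \<and>
      (tight_fusion_frame k m n W \<and> equichordal k m n W \<longleftrightarrow>
         tight_fusion_frame k (k - m) n W' \<and> equichordal k (k - m) n W') \<and>
      (tight_fusion_frame k m n W \<and> strongly_simplicial k m n W \<longleftrightarrow>
         tight_fusion_frame k (k - m) n W' \<and> strongly_simplicial k (k - m) n W') \<and>
      (orthoplectic_packing Z k m n W \<longleftrightarrow> orthoplectic_packing Z k (k - m) n W'))"

end

theory Submission
  imports Defs
begin

lemma adj_carrier[simp]: "A \<in> carrier_mat r c \<Longrightarrow> mat_adjoint A \<in> carrier_mat c r"
  unfolding mat_adjoint_def by auto
lemma adj_dims[simp]: "dim_row (mat_adjoint A) = dim_col A" "dim_col (mat_adjoint A) = dim_row A"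
  unfolding mat_adjoint_def by auto
lemma adj_index[simp]: "i < dim_col A \<Longrightarrow> j < dim_row A \<Longrightarrow> mat_adjoint A $$ (i,j) = conjugate (A $$ (j,i))"
  unfolding mat_adjoint_def by (auto simp: mat_of_rows_index)

lemma conjugate_one[simp]: "conjugate (1::'a::conjugatable_field) = 1"
  using conjugate_dist_mul[of 1 "conjugate (1::'a)"] by simp

lemma conjugate_of_nat[simp]: "conjugate (of_nat n :: 'a::conjugatable_field) = of_nat n"
  by (induct n) (auto simp: conjugate_dist_add)

lemma conjugate_diff: "conjugate (a - b :: 'a::conjugatable_ring) = conjugate a - conjugate b"
  by (metis conjugate_dist_add conjugate_neg diff_conv_add_uminus)

lemma adj_adj[simp]: "mat_adjoint (mat_adjoint A) = A"
  by (rule eq_matI, auto)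

lemma adj_mult: assumes "A \<in> carrier_mat r n" "B \<in> carrier_mat n c"
  shows "mat_adjoint (A * B) = mat_adjoint B * mat_adjoint (A :: 'a :: conjugatable_field mat)"
  by (rule eq_matI, insert assms, auto simp: scalar_prod_def sum_conjugate conjugate_dist_mul mult.commute)

lemma adj_one[simp]: "mat_adjoint (1\<^sub>m n :: 'a :: conjugatable_field mat) = 1\<^sub>m n"
  by (rule eq_matI, auto)

lemma adj_zero[simp]: "mat_adjoint (0\<^sub>m r c :: 'a :: conjugatable_field mat) = 0\<^sub>m c r"
  by (rule eq_matI, auto)

lemma adj_add: assumes "A \<in> carrier_mat r c" "B \<in> carrier_mat r c"
  shows "mat_adjoint (A + B) = mat_adjoint A + mat_adjoint (B :: 'a :: conjugatable_field mat)"
  by (rule eq_matI, insert assms, auto simp: conjugate_dist_add)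

lemma adj_minus: assumes "A \<in> carrier_mat r c" "B \<in> carrier_mat r c"
  shows "mat_adjoint (A - B) = mat_adjoint A - mat_adjoint (B :: 'a :: conjugatable_field mat)"
  by (rule eq_matI, insert assms, auto simp: conjugate_diff)

lemma trace_comm: assumes "A \<in> carrier_mat r c" "B \<in> carrier_mat c r"
  shows "mat_trace (A * B) = mat_trace (B * (A :: 'a :: comm_ring_1 mat))"
proof -
  have "mat_trace (A * B) = (\<Sum>i<r. \<Sum>j<c. A $$ (i,j) * B $$ (j,i))"
    unfolding mat_trace_def using assms by (auto simp: scalar_prod_def intro!: sum.cong)
  also have "\<dots> = (\<Sum>j<c. \<Sum>i<r. B $$ (j,i) * A $$ (i,j))"
    by (subst sum.swap) (simp add: mult.commute)
  also have "\<dots> = mat_trace (B * A)"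
    unfolding mat_trace_def using assms by (auto simp: scalar_prod_def intro!: sum.cong)
  finally show ?thesis .
qed

lemma trace_add: assumes "A \<in> carrier_mat n n" "B \<in> carrier_mat n n"
  shows "mat_trace (A + B) = mat_trace A + mat_trace (B :: 'a :: comm_ring_1 mat)"
  unfolding mat_trace_def using assms by (auto simp: sum.distrib)

lemma trace_minus: assumes "A \<in> carrier_mat n n" "B \<in> carrier_mat n n"
  shows "mat_trace (A - B) = mat_trace A - mat_trace (B :: 'a :: comm_ring_1 mat)"
  unfolding mat_trace_def using assms by (auto simp: sum_subtractf)

lemma trace_one[simp]: "mat_trace (1\<^sub>m n :: 'a :: comm_ring_1 mat) = of_nat n"
  unfolding mat_trace_def by simp

lemma cscalar_mult: assumes L: "L \<in> carrier_mat k m" and w: "w \<in> carrier_vec k" and x: "x \<in> carrier_vec m"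
  shows "w \<bullet>c (L *\<^sub>v x) = (mat_adjoint L *\<^sub>v w) \<bullet>c (x :: 'a :: conjugatable_field vec)"
proof -
  have "w \<bullet>c (L *\<^sub>v x) = (\<Sum>a<k. w $ a * conjugate (\<Sum>j<m. L $$ (a,j) * x $ j))"
    using assms by (auto simp: scalar_prod_def mult_mat_vec_def atLeast0LessThan intro!: sum.cong)
  also have "\<dots> = (\<Sum>a<k. \<Sum>j<m. w $ a * conjugate (L $$ (a,j)) * conjugate (x $ j))"
    by (simp add: sum_conjugate conjugate_dist_mul sum_distrib_left mult.assoc)
  also have "\<dots> = (\<Sum>j<m. \<Sum>a<k. w $ a * conjugate (L $$ (a,j)) * conjugate (x $ j))"
    by (rule sum.swap)
  also have "\<dots> = (mat_adjoint L *\<^sub>v w) \<bullet>c x"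
    using assms by (auto simp: scalar_prod_def mult_mat_vec_def atLeast0LessThan sum_distrib_left mult_ac intro!: sum.cong)
  finally show ?thesis .
qed


lemma zero_mat_vec[simp]: "v \<in> carrier_vec c \<Longrightarrow> 0\<^sub>m r c *\<^sub>v v = (0\<^sub>v r :: 'a :: semiring_0 vec)"
  by (rule eq_vecI, auto)

lemma mat_eq_vecI: fixes A :: "'a :: semiring_1 mat" assumes A: "A \<in> carrier_mat r c" and B: "B \<in> carrier_mat r c"
  and h: "\<And>v. v \<in> carrier_vec c \<Longrightarrow> A *\<^sub>v v = B *\<^sub>v v" shows "A = B"
proof (rule eq_matI)
  fix i j assume i: "i < dim_row B" and j: "j < dim_col B"
  hence "(A *\<^sub>v unit_vec c j) $ i = (B *\<^sub>v unit_vec c j) $ i" using h[of "unit_vec c j"] by simp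
  thus "A $$ (i,j) = B $$ (i,j)" using A B i j by simp
qed (use A B in auto)

lemma onbD: assumes "onb_mat k d W L"
  shows "L \<in> carrier_mat k d" "mat_adjoint L * L = 1\<^sub>m d" "W = {L *\<^sub>v x | x. x \<in> carrier_vec d}"
  using assms unfolding onb_mat_def by auto

lemma perp_iff: fixes L :: "'a :: conjugatable_ordered_field mat"
  assumes o: "onb_mat k m W L" and w: "w \<in> carrier_vec k"
  shows "w \<in> perp k W \<longleftrightarrow> mat_adjoint L *\<^sub>v w = 0\<^sub>v m"
proof
  note L = onbD[OF o]
  let ?z = "mat_adjoint L *\<^sub>v w"
  have z: "?z \<in> carrier_vec m" using mult_mat_vec_carrier[OF adj_carrier[OF L(1)] w] .
  assume "w \<in> perp k W"
  hence h: "\<forall>x\<in>carrier_vec m. w \<bullet>c (L *\<^sub>v x) = 0" using L unfolding perp_def by auto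
  have "?z \<bullet>c ?z = 0" using h[rule_format, OF z] cscalar_mult[OF L(1) w z] by auto
  thus "?z = 0\<^sub>v m" using z by simp
next
  note L = onbD[OF o]
  assume z: "mat_adjoint L *\<^sub>v w = 0\<^sub>v m"
  show "w \<in> perp k W" unfolding perp_def
  proof (intro CollectI conjI ballI w)
    fix u assume "u \<in> W"
    then obtain x where x: "x \<in> carrier_vec m" and u: "u = L *\<^sub>v x" using L by auto
    show "w \<bullet>c u = 0" unfolding u cscalar_mult[OF L(1) w x] z using x by simp
  qed
qed

lemma Q_lemma: fixes A :: "'a :: comm_ring_1 mat"
  assumes A: "A \<in> carrier_mat r k" and L: "L \<in> carrier_mat k m" and L': "L' \<in> carrier_mat k s"
  and M: "M \<in> carrier_mat m k" and M': "M' \<in> carrier_mat s k"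
  shows "A * (1\<^sub>m k - (L * M + L' * M')) = A - ((A * L) * M + (A * L') * M')"
proof -
  have P: "L * M + L' * M' \<in> carrier_mat k k" using L L' M M' by auto
  have "A * (1\<^sub>m k - (L * M + L' * M')) = A * 1\<^sub>m k - A * (L * M + L' * M')"
    by (rule mult_minus_distrib_mat[OF A one_carrier_mat P])
  also have "A * (L * M + L' * M') = A * (L * M) + A * (L' * M')"
    by (rule mult_add_distrib_mat[OF A], insert L L' M M', auto)
  also have "A * (L * M) = (A * L) * M" by (rule assoc_mult_mat[symmetric, OF A L M])
  also have "A * (L' * M') = (A * L') * M'" by (rule assoc_mult_mat[symmetric, OF A L' M'])
  finally show ?thesis using A by simp
qed

lemma proj_sum: fixes L :: "'a :: conjugatable_ordered_field mat"
  assumes o: "onb_mat k m W L" and o': "onb_mat k s (perp k W) L'"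
  shows "L * mat_adjoint L + L' * mat_adjoint L' = 1\<^sub>m k"
    and "mat_adjoint L * L' = 0\<^sub>m m s"
proof -
  note L = onbD[OF o] and L' = onbD[OF o']
  have LL: "mat_adjoint L * L' = 0\<^sub>m m s"
  proof (rule mat_eq_vecI[of _ m s])
    fix y :: "'a vec" assume y: "y \<in> carrier_vec s"
    have "L' *\<^sub>v y \<in> perp k W" using L' y by auto
    hence "mat_adjoint L *\<^sub>v (L' *\<^sub>v y) = 0\<^sub>v m" using perp_iff[OF o] L' y by auto
    thus "(mat_adjoint L * L') *\<^sub>v y = 0\<^sub>m m s *\<^sub>v y"
      using assoc_mult_mat_vec[of "mat_adjoint L" m k L' s y] L L' y by auto
  qed (use L L' in auto)
  thus "mat_adjoint L * L' = 0\<^sub>m m s" .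
  have LL2: "mat_adjoint L' * L = 0\<^sub>m s m"
    using arg_cong[OF LL, of mat_adjoint] adj_mult[of "mat_adjoint L" m k L' s] L L' by auto
  define P where "P = L * mat_adjoint L + L' * mat_adjoint L'"
  have P: "P \<in> carrier_mat k k" unfolding P_def using L L' by auto
  define Q where "Q = 1\<^sub>m k - P"
  have Q: "Q \<in> carrier_mat k k" unfolding Q_def using P by auto
  have "mat_adjoint L * Q = mat_adjoint L - (mat_adjoint L * L * mat_adjoint L + mat_adjoint L * L' * mat_adjoint L')"
    unfolding Q_def P_def using L L'
    using Q_lemma[of "mat_adjoint L" m k L m L' s "mat_adjoint L" "mat_adjoint L'"] L L' by auto
  also have "\<dots> = 0\<^sub>m m k" using L L' LL by simp
  finally have QL: "mat_adjoint L * Q = 0\<^sub>m m k" .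
  have "mat_adjoint L' * Q = mat_adjoint L' - (mat_adjoint L' * L * mat_adjoint L + mat_adjoint L' * L' * mat_adjoint L')"
    unfolding Q_def P_def using L L'
    using Q_lemma[of "mat_adjoint L'" s k L m L' s "mat_adjoint L" "mat_adjoint L'"] L L' by auto
  also have "\<dots> = 0\<^sub>m s k" using L L' LL2 by simp
  finally have QL': "mat_adjoint L' * Q = 0\<^sub>m s k" .
  have "Q = 0\<^sub>m k k"
  proof (rule mat_eq_vecI[OF Q, of _ ])
    fix v :: "'a vec" assume v: "v \<in> carrier_vec k"
    have "mat_adjoint L *\<^sub>v (Q *\<^sub>v v) = 0\<^sub>v m"
      using assoc_mult_mat_vec[of "mat_adjoint L" m k Q k v] QL v L Q by auto
    hence "Q *\<^sub>v v \<in> perp k W" using perp_iff[OF o, of "Q *\<^sub>v v"] Q v by auto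
    then obtain y where y: "y \<in> carrier_vec s" and Qv: "Q *\<^sub>v v = L' *\<^sub>v y" using L' by auto
    have "mat_adjoint L' *\<^sub>v (Q *\<^sub>v v) = 0\<^sub>v s"
      using assoc_mult_mat_vec[of "mat_adjoint L'" s k Q k v] QL' v L' Q by auto
    moreover have "mat_adjoint L' *\<^sub>v (L' *\<^sub>v y) = y"
      using assoc_mult_mat_vec[of "mat_adjoint L'" s k L' s y] L' y by auto
    ultimately have "y = 0\<^sub>v s" using Qv by simp
    thus "Q *\<^sub>v v = 0\<^sub>m k k *\<^sub>v v" using Qv L' v by auto
  qed auto
  show "L * mat_adjoint L + L' * mat_adjoint L' = 1\<^sub>m k"
  proof (rule eq_matI)
    fix i j assume "i < dim_row (1\<^sub>m k :: 'a mat)" "j < dim_col (1\<^sub>m k :: 'a mat)"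
    hence ij: "i < k" "j < k" by auto
    have "Q $$ (i,j) = 0" using \<open>Q = 0\<^sub>m k k\<close> ij by simp
    moreover have "Q $$ (i,j) = 1\<^sub>m k $$ (i,j) - P $$ (i,j)" unfolding Q_def using P ij by simp
    ultimately show "(L * mat_adjoint L + L' * mat_adjoint L') $$ (i, j) = 1\<^sub>m k $$ (i, j)"
      unfolding P_def[symmetric] by simp
  qed (use P[unfolded P_def] in auto)
qed


definition ortho :: "nat \<Rightarrow> 'a :: conjugatable_field vec list \<Rightarrow> bool" where
  "ortho k cs \<longleftrightarrow> set cs \<subseteq> carrier_vec k \<and>
     (\<forall>i<length cs. \<forall>j<length cs. cs ! j \<bullet>c cs ! i = (if i = j then 1 else 0))"

lemma cscalar_sum: "v \<in> carrier_vec k \<Longrightarrow> w \<in> carrier_vec k \<Longrightarrow> v \<bullet>c w = (\<Sum>a<k. v $ a * conjugate (w $ a))"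
  by (auto simp: scalar_prod_def atLeast0LessThan)

lemma cscalar_swap: fixes v w :: "'a :: conjugatable_field vec"
  shows "v \<in> carrier_vec k \<Longrightarrow> w \<in> carrier_vec k \<Longrightarrow> w \<bullet>c v = conjugate (v \<bullet>c w)"
  by (simp add: cscalar_sum sum_conjugate conjugate_dist_mul mult.commute)

lemma cscalar_smult_left: fixes v w :: "'a :: conjugatable_field vec"
  shows "v \<in> carrier_vec k \<Longrightarrow> w \<in> carrier_vec k \<Longrightarrow> (r \<cdot>\<^sub>v v) \<bullet>c w = r * (v \<bullet>c w)"
  by (simp add: cscalar_sum sum_distrib_left mult.assoc)

lemma cscalar_smult_right: fixes v w :: "'a :: conjugatable_field vec"
  shows "v \<in> carrier_vec k \<Longrightarrow> w \<in> carrier_vec k \<Longrightarrow> v \<bullet>c (r \<cdot>\<^sub>v w) = conjugate r * (v \<bullet>c w)"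
  by (simp add: cscalar_sum sum_distrib_left conjugate_dist_mul mult_ac)

lemma adjU_U: assumes "set us \<subseteq> carrier_vec k" "i < length us" "j < length us"
  shows "(mat_adjoint (mat_of_cols k us) * mat_of_cols k us) $$ (i,j) = us ! j \<bullet>c us ! i"
proof -
  have c: "us ! i \<in> carrier_vec k" "us ! j \<in> carrier_vec k" using assms by auto
  show ?thesis using assms c
    by (auto simp: scalar_prod_def mat_of_cols_index mult.commute intro!: sum.cong)
qed

lemma U_adjU: assumes "set us \<subseteq> carrier_vec k" "a < k" "b < k"
  shows "(mat_of_cols k us * mat_adjoint (mat_of_cols k us)) $$ (a,b) =
    (\<Sum>c<length us. us ! c $ a * conjugate (us ! c $ b))"
  using assms by (auto simp: scalar_prod_def mat_of_cols_index atLeast0LessThan intro!: sum.cong)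

lemma ortho_mat: assumes "ortho k cs"
  shows "mat_adjoint (mat_of_cols k cs) * mat_of_cols k cs = 1\<^sub>m (length cs)"
proof (rule eq_matI)
  fix i j assume "i < dim_row (1\<^sub>m (length cs) :: 'a mat)" "j < dim_col (1\<^sub>m (length cs) :: 'a mat)"
  hence ij: "i < length cs" "j < length cs" by auto
  have "(mat_adjoint (mat_of_cols k cs) * mat_of_cols k cs) $$ (i,j) = cs ! j \<bullet>c cs ! i"
    by (rule adjU_U, insert assms ij, auto simp: ortho_def)
  thus "(mat_adjoint (mat_of_cols k cs) * mat_of_cols k cs) $$ (i,j) = 1\<^sub>m (length cs) $$ (i,j)"
    using assms ij by (auto simp: ortho_def)
qed auto

lemma ortho_prefix: "ortho k (cs @ ws) \<Longrightarrow> ortho k cs"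
proof -
  assume a: "ortho k (cs @ ws)"
  show ?thesis unfolding ortho_def
  proof (intro conjI allI impI)
    show "set cs \<subseteq> carrier_vec k" using a unfolding ortho_def by auto
    fix i j assume "i < length cs" "j < length cs"
    thus "cs ! j \<bullet>c cs ! i = (if i = j then 1 else 0)"
    proof -
      assume ij: "i < length cs" "j < length cs"
      have "(cs @ ws) ! j \<bullet>c (cs @ ws) ! i = (if i = j then 1 else 0)"
        using a[unfolded ortho_def] ij by auto
      thus ?thesis using ij by (simp add: nth_append)
    qed
  qed
qed

lemma ortho_suffix: "ortho k (cs @ ws) \<Longrightarrow> ortho k ws"
proof -
  assume a: "ortho k (cs @ ws)"
  show ?thesis unfolding ortho_def
  proof (intro conjI allI impI)
    show "set ws \<subseteq> carrier_vec k" using a unfolding ortho_def by auto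
    fix i j assume "i < length ws" "j < length ws"
    thus "ws ! j \<bullet>c ws ! i = (if i = j then 1 else 0)"
    proof -
      assume ij: "i < length ws" "j < length ws"
      have "(cs @ ws) ! (length cs + j) \<bullet>c (cs @ ws) ! (length cs + i) = (if length cs + i = length cs + j then 1 else 0)"
        using a[unfolded ortho_def, THEN conjunct2, rule_format, of "length cs + i" "length cs + j"] ij by auto
      thus ?thesis using ij by (simp add: nth_append)
    qed
  qed
qed

lemma ortho_cols: assumes "L \<in> carrier_mat k m" "mat_adjoint L * L = 1\<^sub>m m"
  shows "ortho k (cols L)"
proof -
  have L: "L = mat_of_cols k (cols L)" using assms by auto
  show ?thesis unfolding ortho_def
  proof (intro conjI allI impI)
    show "set (cols L) \<subseteq> carrier_vec k" using assms by (auto simp: cols_def)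
    fix i j assume ij: "i < length (cols L)" "j < length (cols L)"
    have "(mat_adjoint L * L) $$ (i,j) = cols L ! j \<bullet>c cols L ! i"
      using ij assms(1) by (auto simp: scalar_prod_def cols_def mult.commute intro!: sum.cong)
    moreover have "(mat_adjoint L * L) $$ (i,j) = (if i = j then 1 else 0)" using assms ij by simp
    ultimately show "cols L ! j \<bullet>c cols L ! i = (if i = j then 1 else 0)" by metis
  qed
qed



lemma adjU_V: assumes "set as \<subseteq> carrier_vec k" "set bs \<subseteq> carrier_vec k" "i < length as" "j < length bs"
  shows "(mat_adjoint (mat_of_cols k as) * mat_of_cols k bs) $$ (i,j) = bs ! j \<bullet>c as ! i"
proof -
  have c: "as ! i \<in> carrier_vec k" "bs ! j \<in> carrier_vec k" using assms by auto
  show ?thesis using assms c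
    by (auto simp: scalar_prod_def mat_of_cols_index mult.commute intro!: sum.cong)
qed

lemma sum_lessThan_add: "(\<Sum>c<a+(b::nat). f c) = (\<Sum>c<a. f c) + (\<Sum>c<b. f (a+c))"
  by (induct b) (auto simp: add.assoc)

lemma not_full: fixes cs :: "'a :: conjugatable_ordered_field vec list"
  assumes o: "ortho k cs" and len: "length cs < k"
  shows "\<exists>v\<in>carrier_vec k. (mat_of_cols k cs * mat_adjoint (mat_of_cols k cs)) *\<^sub>v v \<noteq> v"
proof (rule ccontr)
  define m where "m = length cs"
  define L where "L = mat_of_cols k cs"
  have L: "L \<in> carrier_mat k m" unfolding L_def m_def by auto
  assume "\<not> ?thesis"
  hence "\<And>v. v \<in> carrier_vec k \<Longrightarrow> (L * mat_adjoint L) *\<^sub>v v = 1\<^sub>m k *\<^sub>v v" unfolding L_def by auto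
  hence P1: "L * mat_adjoint L = 1\<^sub>m k" by (intro mat_eq_vecI[of _ k k]) (use L in auto)
  define zs where "zs = cs @ replicate (k - m) (0\<^sub>v k)"
  have zsc: "set zs \<subseteq> carrier_vec k" using o unfolding zs_def ortho_def by auto
  have lz: "length zs = k" using len unfolding zs_def m_def by auto
  define L0 where "L0 = mat_of_cols k zs"
  have L0: "L0 \<in> carrier_mat k k" unfolding L0_def using lz by auto
  have "L0 * mat_adjoint L0 = 1\<^sub>m k"
  proof (rule eq_matI)
    fix a b assume "a < dim_row (1\<^sub>m k :: 'a mat)" "b < dim_col (1\<^sub>m k :: 'a mat)"
    hence ab: "a < k" "b < k" by auto
    have "(L0 * mat_adjoint L0) $$ (a,b) = (\<Sum>c<k. zs ! c $ a * conjugate (zs ! c $ b))"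
      unfolding L0_def using U_adjU[OF zsc ab] lz by simp
    also have "\<dots> = (\<Sum>c<m. zs ! c $ a * conjugate (zs ! c $ b))"
      by (rule sum.mono_neutral_right, insert len ab, auto simp: zs_def m_def nth_append)
    also have "\<dots> = (\<Sum>c<m. cs ! c $ a * conjugate (cs ! c $ b))"
      by (rule sum.cong, auto simp: zs_def nth_append m_def)
    also have "\<dots> = (L * mat_adjoint L) $$ (a,b)"
      unfolding L_def using U_adjU[of cs k a b] o ab by (simp add: ortho_def m_def)
    finally show "(L0 * mat_adjoint L0) $$ (a,b) = 1\<^sub>m k $$ (a,b)" using P1 by simp
  qed (use L0 in auto)
  hence "mat_adjoint L0 * L0 = 1\<^sub>m k" by (rule mat_mult_left_right_inverse[OF L0 adj_carrier[OF L0]])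
  hence "(mat_adjoint L0 * L0) $$ (k - 1, k - 1) = 1" using len by simp
  moreover have "(mat_adjoint L0 * L0) $$ (k - 1, k - 1) = zs ! (k - 1) \<bullet>c zs ! (k - 1)"
    unfolding L0_def by (rule adjU_U[OF zsc], insert len lz, auto)
  moreover have "zs ! (k - 1) = 0\<^sub>v k" using len unfolding zs_def m_def by (auto simp: nth_append)
  ultimately show False by simp
qed



definition sqrt_hyp :: "'a :: conjugatable_ordered_field itself \<Rightarrow> bool" where
  "sqrt_hyp TYPE('a) \<longleftrightarrow> (\<forall>x::'a. 0 < x \<longrightarrow> (\<exists>r. r * conjugate r * x = 1))"

lemma ext_step: fixes cs :: "'a :: conjugatable_ordered_field vec list"
  assumes sq: "sqrt_hyp TYPE('a)" and o: "ortho k cs" and len: "length cs < k"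
  shows "\<exists>u. ortho k (cs @ [u])"
proof -
  define m where "m = length cs"
  define L where "L = mat_of_cols k cs"
  have L: "L \<in> carrier_mat k m" unfolding L_def m_def by auto
  have LL: "mat_adjoint L * L = 1\<^sub>m m" unfolding L_def m_def by (rule ortho_mat[OF o])
  have csc: "set cs \<subseteq> carrier_vec k" using o unfolding ortho_def by auto
  from not_full[OF o len] obtain v where v: "v \<in> carrier_vec k" and nv: "(L * mat_adjoint L) *\<^sub>v v \<noteq> v"
    unfolding L_def by auto
  define w where "w = v - (L * mat_adjoint L) *\<^sub>v v"
  have Pv: "(L * mat_adjoint L) *\<^sub>v v \<in> carrier_vec k" using mult_mat_vec_carrier[of "L * mat_adjoint L" k k v] L v by auto
  have w: "w \<in> carrier_vec k" unfolding w_def using v Pv by auto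
  have w0: "w \<noteq> 0\<^sub>v k"
  proof
    assume "w = 0\<^sub>v k"
    hence wi: "\<And>i. i < k \<Longrightarrow> w $ i = 0" by simp
    have "v $ i = ((L * mat_adjoint L) *\<^sub>v v) $ i" if i: "i < k" for i
    proof -
      have "w $ i = v $ i - ((L * mat_adjoint L) *\<^sub>v v) $ i" unfolding w_def using i Pv by (metis carrier_vecD index_minus_vec(1))
      thus ?thesis using wi[OF i] by simp
    qed
    hence "v = (L * mat_adjoint L) *\<^sub>v v" using v Pv L by (intro eq_vecI, auto)
    thus False using nv by simp
  qed
  have "mat_adjoint L *\<^sub>v w = mat_adjoint L *\<^sub>v v - mat_adjoint L *\<^sub>v ((L * mat_adjoint L) *\<^sub>v v)"
    unfolding w_def by (rule mult_minus_distrib_mat_vec[OF adj_carrier[OF L] v Pv])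
  also have "mat_adjoint L *\<^sub>v ((L * mat_adjoint L) *\<^sub>v v) = ((mat_adjoint L * L) * mat_adjoint L) *\<^sub>v v"
    using assoc_mult_mat_vec[of "mat_adjoint L" m k "L * mat_adjoint L" k v]
      assoc_mult_mat[of "mat_adjoint L" m k L m "mat_adjoint L" k] L v by auto
  also have "\<dots> = mat_adjoint L *\<^sub>v v" using LL L by simp
  finally have Lw: "mat_adjoint L *\<^sub>v w = 0\<^sub>v m" using minus_cancel_vec[OF mult_mat_vec_carrier[OF adj_carrier[OF L] v]] by simp
  have wc: "w \<bullet>c cs ! i = 0" if i: "i < m" for i
  proof -
    have ci: "cs ! i \<in> carrier_vec k" using i csc unfolding m_def by auto
    have "(mat_adjoint L *\<^sub>v w) $ i = w \<bullet>c cs ! i"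
      using i w ci unfolding L_def m_def
      by (auto simp: scalar_prod_def mat_of_cols_index mult.commute intro!: sum.cong)
    thus ?thesis using Lw i by simp
  qed
  have "w \<bullet>c w > 0" using w w0 by simp
  then obtain r where r: "r * conjugate r * (w \<bullet>c w) = 1" using sq unfolding sqrt_hyp_def by blast
  define u where "u = r \<cdot>\<^sub>v w"
  have u: "u \<in> carrier_vec k" unfolding u_def using w by auto
  show ?thesis
  proof (rule exI[of _ u], unfold ortho_def, intro conjI allI impI)
    show "set (cs @ [u]) \<subseteq> carrier_vec k" using csc u by auto
    fix i j assume i: "i < length (cs @ [u])" and j: "j < length (cs @ [u])"
    consider "i < m" "j < m" | "i < m" "j = m" | "i = m" "j < m" | "i = m" "j = m"
      using i j unfolding m_def by fastforce
    thus "(cs @ [u]) ! j \<bullet>c (cs @ [u]) ! i = (if i = j then 1 else 0)"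
    proof cases
      case 1 thus ?thesis using o[unfolded ortho_def, THEN conjunct2, rule_format, of i j] unfolding m_def by (simp add: nth_append)
    next
      case 2
      have "u \<bullet>c cs ! i = r * (w \<bullet>c cs ! i)" unfolding u_def
        by (rule cscalar_smult_left[OF w], insert 2 csc, auto simp: m_def)
      thus ?thesis using 2 wc[of i] by (auto simp: nth_append m_def)
    next
      case 3
      have ci: "cs ! j \<in> carrier_vec k" using 3 csc by (auto simp: m_def)
      have "cs ! j \<bullet>c u = conjugate r * (cs ! j \<bullet>c w)" unfolding u_def
        by (rule cscalar_smult_right[OF ci w])
      also have "cs ! j \<bullet>c w = conjugate (w \<bullet>c cs ! j)" by (rule cscalar_swap[OF w ci])
      finally show ?thesis using 3 wc[of j] by (auto simp: nth_append m_def)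
    next
      case 4
      have "u \<bullet>c u = r * (conjugate r * (w \<bullet>c w))" unfolding u_def
        using cscalar_smult_left[OF _ u] cscalar_smult_right[OF w w] w u_def by auto
      thus ?thesis using 4 r by (auto simp: nth_append m_def mult.assoc)
    qed
  qed
qed

lemma ext_list_aux: fixes cs :: "'a :: conjugatable_ordered_field vec list"
  assumes sq: "sqrt_hyp TYPE('a)"
  shows "k - length cs = d \<Longrightarrow> ortho k cs \<Longrightarrow> length cs \<le> k \<Longrightarrow> \<exists>ws. length ws = k - length cs \<and> ortho k (cs @ ws)"
proof (induct d arbitrary: cs)
  case 0
  thus ?case by (intro exI[of _ "[]"], auto)
next
  case (Suc d)
  from ext_step[OF sq Suc(3)] Suc(2,4) obtain u where u: "ortho k (cs @ [u])" by fastforce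
  from Suc(1)[of "cs @ [u]"] u Suc(2,4) obtain ws where "length ws = k - length (cs @ [u])"
    "ortho k ((cs @ [u]) @ ws)" by fastforce
  thus ?case using Suc(2) by (intro exI[of _ "u # ws"], auto)
qed

lemma ext_list: fixes cs :: "'a :: conjugatable_ordered_field vec list"
  assumes sq: "sqrt_hyp TYPE('a)"
  shows "ortho k cs \<Longrightarrow> length cs \<le> k \<Longrightarrow> \<exists>ws. length ws = k - length cs \<and> ortho k (cs @ ws)"
  using ext_list_aux[OF sq refl] by blast



lemma mat_vec_zero[simp]: "A \<in> carrier_mat r c \<Longrightarrow> A *\<^sub>v 0\<^sub>v c = (0\<^sub>v r :: 'a :: semiring_0 vec)"
  by (intro eq_vecI) (auto simp: scalar_prod_def)

lemma perp_onb_exists: fixes L :: "'a :: conjugatable_ordered_field mat"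
  assumes sq: "sqrt_hyp TYPE('a)" and o: "onb_mat k m W L" and mk: "m \<le> k"
  shows "\<exists>L'. onb_mat k (k - m) (perp k W) L'"
proof -
  note L = onbD[OF o]
  define cs where "cs = cols L"
  have oc: "ortho k cs" unfolding cs_def by (rule ortho_cols[OF L(1,2)])
  have lc: "length cs = m" unfolding cs_def using L by simp
  have csc: "set cs \<subseteq> carrier_vec k" using oc unfolding ortho_def by auto
  obtain ws where lw: "length ws = k - m" and ow: "ortho k (cs @ ws)"
    using ext_list[OF sq oc] lc mk by auto
  have wsc: "set ws \<subseteq> carrier_vec k" using ow unfolding ortho_def by auto
  define us where "us = cs @ ws"
  have lu: "length us = k" using lw lc mk unfolding us_def by simp
  have usc: "set us \<subseteq> carrier_vec k" using csc wsc unfolding us_def by auto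
  define U where "U = mat_of_cols k us"
  have U: "U \<in> carrier_mat k k" unfolding U_def using lu by auto
  have "mat_adjoint U * U = 1\<^sub>m k" using ortho_mat[OF ow] lu unfolding U_def us_def by simp
  hence UU: "U * mat_adjoint U = 1\<^sub>m k" by (rule mat_mult_left_right_inverse[OF adj_carrier[OF U] U])
  define L' where "L' = mat_of_cols k ws"
  have L': "L' \<in> carrier_mat k (k - m)" unfolding L'_def using lw by auto
  have LeqU: "L = mat_of_cols k cs" using L unfolding cs_def by (metis carrier_matD(1) mat_of_cols_cols)
  have sum: "L * mat_adjoint L + L' * mat_adjoint L' = 1\<^sub>m k"
  proof (rule eq_matI)
    fix a b assume "a < dim_row (1\<^sub>m k :: 'a mat)" "b < dim_col (1\<^sub>m k :: 'a mat)"
    hence ab: "a < k" "b < k" by auto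
    have "(U * mat_adjoint U) $$ (a,b) = (\<Sum>c<k. us ! c $ a * conjugate (us ! c $ b))"
      unfolding U_def using U_adjU[OF usc ab] lu by simp
    also have "\<dots> = (\<Sum>c<m + (k - m). us ! c $ a * conjugate (us ! c $ b))" using mk by simp
    also have "\<dots> = (\<Sum>c<m. us ! c $ a * conjugate (us ! c $ b)) + (\<Sum>c<k - m. us ! (m + c) $ a * conjugate (us ! (m + c) $ b))"
      by (rule sum_lessThan_add)
    also have "(\<Sum>c<m. us ! c $ a * conjugate (us ! c $ b)) = (\<Sum>c<m. cs ! c $ a * conjugate (cs ! c $ b))"
      unfolding us_def using lc by (intro sum.cong, auto simp: nth_append)
    also have "\<dots> = (L * mat_adjoint L) $$ (a,b)"
      unfolding LeqU using U_adjU[OF csc ab] lc by simp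
    also have "(\<Sum>c<k - m. us ! (m + c) $ a * conjugate (us ! (m + c) $ b)) = (\<Sum>c<k - m. ws ! c $ a * conjugate (ws ! c $ b))"
      unfolding us_def using lc by (intro sum.cong, auto simp: nth_append)
    also have "\<dots> = (L' * mat_adjoint L') $$ (a,b)"
      unfolding L'_def using U_adjU[OF wsc ab] lw by simp
    finally have "(L * mat_adjoint L) $$ (a,b) + (L' * mat_adjoint L') $$ (a,b) = 1\<^sub>m k $$ (a,b)"
      using UU by simp
    thus "(L * mat_adjoint L + L' * mat_adjoint L') $$ (a,b) = 1\<^sub>m k $$ (a,b)"
      using ab L L' by simp
  qed (use L L' in auto)
  have LL': "mat_adjoint L * L' = 0\<^sub>m m (k - m)"
  proof (rule eq_matI)
    fix i j assume "i < dim_row (0\<^sub>m m (k - m) :: 'a mat)" "j < dim_col (0\<^sub>m m (k - m) :: 'a mat)"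
    hence ij: "i < m" "j < k - m" by auto
    have "(mat_adjoint L * L') $$ (i,j) = ws ! j \<bullet>c cs ! i"
      unfolding LeqU L'_def by (rule adjU_V[OF csc wsc], insert ij lc lw, auto)
    also have "\<dots> = (cs @ ws) ! (m + j) \<bullet>c (cs @ ws) ! i" using ij lc by (simp add: nth_append)
    also have "\<dots> = 0" using ow[unfolded ortho_def, THEN conjunct2, rule_format, of i "m + j"] ij lc lw by simp
    finally show "(mat_adjoint L * L') $$ (i,j) = 0\<^sub>m m (k - m) $$ (i,j)" using ij by simp
  qed (use L L' in auto)
  have oL': "mat_adjoint L' * L' = 1\<^sub>m (k - m)"
    using ortho_mat[OF ortho_suffix[OF ow]] lw unfolding L'_def by simp
  show ?thesis
  proof (rule exI[of _ L'], unfold onb_mat_def, intro conjI L' oL')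
    show "perp k W = {L' *\<^sub>v x |x. x \<in> carrier_vec (k - m)}"
    proof (rule equalityI; rule subsetI)
      fix v assume vp: "v \<in> perp k W"
      hence v: "v \<in> carrier_vec k" unfolding perp_def by auto
      have Lv: "mat_adjoint L *\<^sub>v v = 0\<^sub>v m" using perp_iff[OF o v] vp by simp
      have "v = (L * mat_adjoint L + L' * mat_adjoint L') *\<^sub>v v" unfolding sum using v by simp
      also have "\<dots> = (L * mat_adjoint L) *\<^sub>v v + (L' * mat_adjoint L') *\<^sub>v v"
        by (rule add_mult_distrib_mat_vec[of _ k k], insert L L' v, auto)
      also have "(L * mat_adjoint L) *\<^sub>v v = L *\<^sub>v (mat_adjoint L *\<^sub>v v)"
        using L v by (simp add: assoc_mult_mat_vec[of _ k m _ k])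
      also have "\<dots> = 0\<^sub>v k" unfolding Lv using L by simp
      also have "(L' * mat_adjoint L') *\<^sub>v v = L' *\<^sub>v (mat_adjoint L' *\<^sub>v v)"
        using L' v by (simp add: assoc_mult_mat_vec[of _ k "k - m" _ k])
      finally have "v = 0\<^sub>v k + L' *\<^sub>v (mat_adjoint L' *\<^sub>v v)" .
      moreover have "L' *\<^sub>v (mat_adjoint L' *\<^sub>v v) \<in> carrier_vec k"
        using mult_mat_vec_carrier[OF L' mult_mat_vec_carrier[OF adj_carrier[OF L'] v]] .
      ultimately have "v = L' *\<^sub>v (mat_adjoint L' *\<^sub>v v)" by simp
      moreover have "mat_adjoint L' *\<^sub>v v \<in> carrier_vec (k - m)" using mult_mat_vec_carrier[OF adj_carrier[OF L'] v] .
      ultimately show "v \<in> {L' *\<^sub>v x |x. x \<in> carrier_vec (k - m)}" by blast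
    next
      fix v assume "v \<in> {L' *\<^sub>v x |x. x \<in> carrier_vec (k - m)}"
      then obtain x where x: "x \<in> carrier_vec (k - m)" and vx: "v = L' *\<^sub>v x" by auto
      have v: "v \<in> carrier_vec k" unfolding vx using L' x by auto
      have "mat_adjoint L *\<^sub>v v = (mat_adjoint L * L') *\<^sub>v x"
        unfolding vx using L L' x by (simp add: assoc_mult_mat_vec[of _ m k _ "k - m"])
      also have "\<dots> = 0\<^sub>v m" unfolding LL' using x by simp
      finally show "v \<in> perp k W" using perp_iff[OF o v] by simp
    qed
  qed
qed



definition qq :: "'a :: comm_ring_1 poly" where "qq = [:1, -1:]"

lemma qq_qq: "pcompose (qq :: 'a :: comm_ring_1 poly) qq = [:0,1:]"
  unfolding qq_def by (simp add: pcompose_pCons)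

lemma pcompose_qq_twice: "pcompose (pcompose p (qq :: 'a :: comm_ring_1 poly)) qq = p"
  by (simp add: pcompose_assoc[symmetric] qq_qq)

lemma pcompose_power_left': "pcompose (r ^ n) q = (pcompose r q) ^ n"
  by (induct n) (auto simp: pcompose_mult pcompose_1)

lemma order_pcomp_ge: fixes p :: "'a :: field poly"
  assumes nz: "pcompose p qq \<noteq> 0"
  shows "Polynomial.order (1 - e) p \<le> Polynomial.order e (pcompose p qq)"
proof -
  define n where "n = Polynomial.order (1 - e) p"
  have "[:-(1-e), 1:] ^ n dvd p" unfolding n_def by (rule order_1)
  then obtain s where "p = [:-(1-e), 1:] ^ n * s" by (elim dvdE)
  hence "pcompose p qq = pcompose ([:-(1-e), 1:] ^ n) qq * pcompose s qq" by (simp add: pcompose_mult)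
  also have "pcompose ([:-(1-e), 1:] ^ n) qq = (- [:-e, 1:]) ^ n"
    unfolding pcompose_power_left' qq_def by (simp add: pcompose_pCons)
  finally have "(- [:-e, 1:]) ^ n dvd pcompose p qq" by simp
  moreover have "[:-e, 1:] ^ n dvd (- [:-e, 1:]) ^ n"
    unfolding power_minus[of "[:-e,1:]"] by (rule dvd_triv_right)
  ultimately have "[:-e, 1:] ^ n dvd pcompose p qq" using dvd_trans by blast
  thus ?thesis using nz unfolding n_def by (simp add: order_divides)
qed

lemma order_pcomp: fixes p :: "'a :: field poly"
  assumes nz: "p \<noteq> 0"
  shows "Polynomial.order e (pcompose p qq) = Polynomial.order (1 - e) p"
proof -
  have nz2: "pcompose p qq \<noteq> 0" using nz pcompose_qq_twice[of p] by auto
  have "Polynomial.order (1 - e) p \<le> Polynomial.order e (pcompose p qq)" by (rule order_pcomp_ge[OF nz2])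
  moreover have "Polynomial.order (1 - (1 - e)) (pcompose p qq) \<le> Polynomial.order (1 - e) (pcompose (pcompose p qq) qq)"
    by (rule order_pcomp_ge, simp add: pcompose_qq_twice nz)
  ultimately show ?thesis by (simp add: pcompose_qq_twice)
qed

lemma order_neg_power: fixes p :: "'a :: field poly"
  assumes "p \<noteq> 0" shows "Polynomial.order e ((-1) ^ n * p) = Polynomial.order e p"
proof -
  have "Polynomial.order e ((-1) ^ n * p) = Polynomial.order e ((-1) ^ n) + Polynomial.order e p"
    by (rule order_mult, insert assms, auto)
  moreover have "Polynomial.order e ((-1) ^ n :: 'a poly) = 0"
    by (rule order_0I, simp)
  ultimately show ?thesis by simp
qed

lemma order_x_power: "Polynomial.order e ([:0,1:] ^ n :: 'a :: field poly) = (if e = 0 then n else 0)"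
proof (cases "e = 0")
  case True thus ?thesis using order_power_n_n[of 0 n] by simp
next
  case False
  have "poly ([:0,1:] ^ n) e \<noteq> 0" using False by simp
  thus ?thesis using False by (simp add: order_0I)
qed

interpretation const_hom: comm_ring_hom "\<lambda>a :: 'a :: comm_ring_1. [:a:]"
  by (unfold_locales, auto)

interpretation qq_hom: comm_ring_hom "\<lambda>p :: 'a :: comm_ring_1 poly. pcompose p qq"
  by (unfold_locales, auto simp: pcompose_add pcompose_mult pcompose_1)



lemma cpm_eq: fixes M :: "'a :: comm_ring_1 mat"
  assumes M: "M \<in> carrier_mat n n"
  shows "char_poly_matrix M = [:0,1:] \<cdot>\<^sub>m 1\<^sub>m n - map_mat (\<lambda>a. [:a:]) M"
  unfolding char_poly_matrix_def using M by (intro eq_matI, auto)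

lemma qq_crh: "comm_ring_hom (\<lambda>p :: 'a :: comm_ring_1 poly. pcompose p qq)"
  by unfold_locales

lemma aux_pc: "[:c:] + (pCons 0 1 - 1) = pCons (c - 1) (1::'a::comm_ring_1 poly)"
  by (rule poly_eqI) (auto simp: coeff_pCons split: nat.split)

lemma char_poly_one_minus: fixes M :: "'a :: comm_ring_1 mat"
  assumes M: "M \<in> carrier_mat n n"
  shows "char_poly (1\<^sub>m n - M) = (-1) ^ n * pcompose (char_poly M) qq"
proof -
  have "char_poly_matrix (1\<^sub>m n - M) = (-1) \<cdot>\<^sub>m map_mat (\<lambda>p. pcompose p qq) (char_poly_matrix M)"
    unfolding char_poly_matrix_def using M
    by (intro eq_matI, auto simp: qq_def pcompose_pCons pcompose_add aux_pc)
  hence "char_poly (1\<^sub>m n - M) = det ((-1) \<cdot>\<^sub>m map_mat (\<lambda>p. pcompose p qq) (char_poly_matrix M))"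
    unfolding char_poly_def by simp
  also have "\<dots> = (-1) ^ n * pcompose (char_poly M) qq"
    unfolding det_smult comm_ring_hom.hom_det[OF qq_crh] char_poly_def using char_poly_matrix_closed[OF M] by simp
  finally show ?thesis .
qed

lemma sylvester: fixes A :: "'a :: field mat"
  assumes A: "A \<in> carrier_mat n p" and B: "B \<in> carrier_mat p n"
  shows "[:0,1:] ^ p * char_poly (A * B) = [:0,1:] ^ n * char_poly (B * A)"
proof -
  define x where "x = ([:0,1:] :: 'a poly)"
  define a where "a = map_mat (\<lambda>c. [:c:]) A"
  define b where "b = map_mat (\<lambda>c. [:c:]) B"
  have a: "a \<in> carrier_mat n p" and b: "b \<in> carrier_mat p n" unfolding a_def b_def using A B by auto
  have ab: "map_mat (\<lambda>c. [:c:]) (A * B) = a * b" unfolding a_def b_def by (rule const_hom.mat_hom_mult[OF A B])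
  have ba: "map_mat (\<lambda>c. [:c:]) (B * A) = b * a" unfolding a_def b_def by (rule const_hom.mat_hom_mult[OF B A])
  have cAB: "char_poly (A * B) = det (x \<cdot>\<^sub>m 1\<^sub>m n - a * b)"
    unfolding char_poly_def cpm_eq[OF mult_carrier_mat[OF A B]] ab x_def ..
  have cBA: "char_poly (B * A) = det (x \<cdot>\<^sub>m 1\<^sub>m p - b * a)"
    unfolding char_poly_def cpm_eq[OF mult_carrier_mat[OF B A]] ba x_def ..
  define N where "N = four_block_mat (x \<cdot>\<^sub>m 1\<^sub>m n) a b (1\<^sub>m p)"
  define E1 where "E1 = four_block_mat (1\<^sub>m n) (-a) (0\<^sub>m p n) (x \<cdot>\<^sub>m 1\<^sub>m p)"
  define E2 where "E2 = four_block_mat (1\<^sub>m n) (0\<^sub>m n p) (-b) (x \<cdot>\<^sub>m 1\<^sub>m p)"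
  have N: "N \<in> carrier_mat (n + p) (n + p)" unfolding N_def using a b by auto
  have E1: "E1 \<in> carrier_mat (n + p) (n + p)" unfolding E1_def using a b by auto
  have E2: "E2 \<in> carrier_mat (n + p) (n + p)" unfolding E2_def using a b by auto
  have dx: "det (x \<cdot>\<^sub>m 1\<^sub>m p) = x ^ p" by (simp add: det_smult)
  have "E1 * N = four_block_mat (1\<^sub>m n * (x \<cdot>\<^sub>m 1\<^sub>m n) + (-a) * b) (1\<^sub>m n * a + (-a) * 1\<^sub>m p)
     (0\<^sub>m p n * (x \<cdot>\<^sub>m 1\<^sub>m n) + (x \<cdot>\<^sub>m 1\<^sub>m p) * b) (0\<^sub>m p n * a + (x \<cdot>\<^sub>m 1\<^sub>m p) * 1\<^sub>m p)"
    unfolding E1_def N_def by (rule mult_four_block_mat, insert a b, auto)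
  also have "1\<^sub>m n * (x \<cdot>\<^sub>m 1\<^sub>m n) + (-a) * b = x \<cdot>\<^sub>m 1\<^sub>m n - a * b"
    using a b by (intro eq_matI, auto)
  also have "1\<^sub>m n * a + (-a) * 1\<^sub>m p = 0\<^sub>m n p"
    using a b by (intro eq_matI, auto)
  also have "0\<^sub>m p n * (x \<cdot>\<^sub>m 1\<^sub>m n) + (x \<cdot>\<^sub>m 1\<^sub>m p) * b = x \<cdot>\<^sub>m b"
    using a b by (intro eq_matI, auto)
  also have "0\<^sub>m p n * a + (x \<cdot>\<^sub>m 1\<^sub>m p) * 1\<^sub>m p = x \<cdot>\<^sub>m 1\<^sub>m p"
    using a b by (intro eq_matI, auto)
  finally have E1N: "E1 * N = four_block_mat (x \<cdot>\<^sub>m 1\<^sub>m n - a * b) (0\<^sub>m n p) (x \<cdot>\<^sub>m b) (x \<cdot>\<^sub>m 1\<^sub>m p)" .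
  have "E2 * N = four_block_mat (1\<^sub>m n * (x \<cdot>\<^sub>m 1\<^sub>m n) + 0\<^sub>m n p * b) (1\<^sub>m n * a + 0\<^sub>m n p * 1\<^sub>m p)
     ((-b) * (x \<cdot>\<^sub>m 1\<^sub>m n) + (x \<cdot>\<^sub>m 1\<^sub>m p) * b) ((-b) * a + (x \<cdot>\<^sub>m 1\<^sub>m p) * 1\<^sub>m p)"
    unfolding E2_def N_def by (rule mult_four_block_mat, insert a b, auto)
  also have "1\<^sub>m n * (x \<cdot>\<^sub>m 1\<^sub>m n) + 0\<^sub>m n p * b = x \<cdot>\<^sub>m 1\<^sub>m n"
    using a b by (intro eq_matI, auto)
  also have "1\<^sub>m n * a + 0\<^sub>m n p * 1\<^sub>m p = a"
    using a b by (intro eq_matI, auto)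
  also have "(-b) * (x \<cdot>\<^sub>m 1\<^sub>m n) + (x \<cdot>\<^sub>m 1\<^sub>m p) * b = 0\<^sub>m p n"
    using a b by (intro eq_matI, auto)
  also have "(-b) * a + (x \<cdot>\<^sub>m 1\<^sub>m p) * 1\<^sub>m p = x \<cdot>\<^sub>m 1\<^sub>m p - b * a"
    using a b by (intro eq_matI, auto)
  finally have E2N: "E2 * N = four_block_mat (x \<cdot>\<^sub>m 1\<^sub>m n) a (0\<^sub>m p n) (x \<cdot>\<^sub>m 1\<^sub>m p - b * a)" .
  have dE1: "det E1 = x ^ p" unfolding E1_def
    by (subst det_four_block_mat_lower_left_zero[of _ n _ p], insert a, auto simp: dx)
  have dE2: "det E2 = x ^ p" unfolding E2_def
    by (subst det_four_block_mat_upper_right_zero[of _ n _ p], insert b, auto simp: dx)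
  have "det (E1 * N) = det (x \<cdot>\<^sub>m 1\<^sub>m n - a * b) * x ^ p" unfolding E1N
    by (subst det_four_block_mat_upper_right_zero[of _ n _ p], insert a b, auto simp: dx)
  hence 1: "x ^ p * det N = x ^ p * char_poly (A * B)"
    unfolding det_mult[OF E1 N] dE1 cAB by (simp add: mult.commute)
  have "det (E2 * N) = x ^ n * det (x \<cdot>\<^sub>m 1\<^sub>m p - b * a)" unfolding E2N
    by (subst det_four_block_mat_lower_left_zero[of _ n _ p], insert a b, auto simp: det_smult)
  hence 2: "x ^ p * det N = x ^ n * char_poly (B * A)"
    unfolding det_mult[OF E2 N] dE2 cBA .
  have "x ^ p \<noteq> 0" unfolding x_def by simp
  hence "det N = char_poly (A * B)" using 1 mult_left_cancel by blast
  with 2 show ?thesis unfolding x_def by simp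
qed



lemma cp_nz: fixes M :: "'a :: field mat" assumes "M \<in> carrier_mat n n" shows "char_poly M \<noteq> 0"
  using degree_monic_char_poly[OF assms] by auto

lemma sw: fixes F :: "'a :: conjugatable_field mat"
  assumes F: "F \<in> carrier_mat k t" and G: "G \<in> carrier_mat k u" and M: "M \<in> carrier_mat k m"
  and M': "M' \<in> carrier_mat k s" and P: "M * mat_adjoint M + M' * mat_adjoint M' = 1\<^sub>m k"
  shows "mat_adjoint F * M' * mat_adjoint M' * G = mat_adjoint F * G - (mat_adjoint F * M) * (mat_adjoint M * G)"
proof -
  have P': "M' * mat_adjoint M' = 1\<^sub>m k - M * mat_adjoint M"
  proof (rule eq_matI)
    fix i j assume "i < dim_row (1\<^sub>m k - M * mat_adjoint M)" "j < dim_col (1\<^sub>m k - M * mat_adjoint M)"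
    hence ij: "i < k" "j < k" using M by auto
    have "(M * mat_adjoint M + M' * mat_adjoint M') $$ (i,j) = 1\<^sub>m k $$ (i,j)" using P by simp
    thus "(M' * mat_adjoint M') $$ (i, j) = (1\<^sub>m k - M * mat_adjoint M) $$ (i, j)"
      using ij M M' by (simp add: algebra_simps)
  qed (use M M' in auto)
  have "mat_adjoint F * M' * mat_adjoint M' * G = mat_adjoint F * (M' * mat_adjoint M') * G"
    using F M' by (simp add: assoc_mult_mat[of _ t k _ s _ k])
  also have "\<dots> = mat_adjoint F * (1\<^sub>m k - M * mat_adjoint M) * G" unfolding P' ..
  also have "mat_adjoint F * (1\<^sub>m k - M * mat_adjoint M) = mat_adjoint F - mat_adjoint F * M * mat_adjoint M"
    using F M by (simp add: mult_minus_distrib_mat[of _ t k _ k] assoc_mult_mat[of _ t k _ m _ k])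
  also have "(mat_adjoint F - mat_adjoint F * M * mat_adjoint M) * G = mat_adjoint F * G - mat_adjoint F * M * mat_adjoint M * G"
    by (rule minus_mult_distrib_mat[of _ t k _ G u], insert F M G, auto)
  also have "mat_adjoint F * M * mat_adjoint M * G = (mat_adjoint F * M) * (mat_adjoint M * G)"
    by (rule assoc_mult_mat[of _ t m _ k _ u], insert F M G, auto)
  finally show ?thesis .
qed

lemma pair_orders: fixes L :: "'a :: conjugatable_field mat"
  assumes L: "L \<in> carrier_mat k m" and M: "M \<in> carrier_mat k m"
  and L': "L' \<in> carrier_mat k s" and M': "M' \<in> carrier_mat k s"
  and LL': "mat_adjoint L' * L' = 1\<^sub>m s" and MM: "mat_adjoint M * M = 1\<^sub>m m"
  and PL: "L * mat_adjoint L + L' * mat_adjoint L' = 1\<^sub>m k"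
  and PM: "M * mat_adjoint M + M' * mat_adjoint M' = 1\<^sub>m k"
  shows "Polynomial.order e (char_poly (mat_adjoint L' * M' * mat_adjoint M' * L')) + (if e = 1 then m else 0)
       = Polynomial.order e (char_poly (mat_adjoint L * M * mat_adjoint M * L)) + (if e = 1 then s else 0)"
proof -
  define A where "A = mat_adjoint L * M"
  define Y where "Y = mat_adjoint L' * M"
  have A: "A \<in> carrier_mat m m" unfolding A_def using L M by auto
  have Y: "Y \<in> carrier_mat s m" unfolding Y_def using L' M by auto
  have aA: "mat_adjoint A = mat_adjoint M * L" unfolding A_def using adj_mult[of "mat_adjoint L" m k M m] L M by simp
  have aY: "mat_adjoint Y = mat_adjoint M * L'" unfolding Y_def using adj_mult[of "mat_adjoint L'" s k M m] L' M by simp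
  have C: "mat_adjoint L * M * mat_adjoint M * L = A * mat_adjoint A" unfolding aA unfolding A_def
    by (rule assoc_mult_mat[of _ m m _ k _ m], insert L M, auto)
  have C': "mat_adjoint L' * M' * mat_adjoint M' * L' = 1\<^sub>m s - Y * mat_adjoint Y"
    using sw[OF L' L' M M' PM] LL' unfolding Y_def aY[unfolded Y_def] by simp
  have PL': "L' * mat_adjoint L' + L * mat_adjoint L = 1\<^sub>m k" using PL L L'
    by (subst comm_add_mat[of _ k k], auto)
  have "mat_adjoint A * A = mat_adjoint M * L * mat_adjoint L * M" unfolding aA unfolding A_def
    by (rule assoc_mult_mat[symmetric, of "mat_adjoint M * L" m m "mat_adjoint L" k M m], insert L M, auto)
  also have "\<dots> = mat_adjoint M * M - (mat_adjoint M * L') * (mat_adjoint L' * M)"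
    by (rule sw[OF M M L' L PL'])
  finally have AA: "mat_adjoint A * A = 1\<^sub>m m - mat_adjoint Y * Y" unfolding aY unfolding MM Y_def .
  define x where "x = ([:0,1:] :: 'a poly)"
  have x0: "x ^ n \<noteq> 0" for n unfolding x_def by simp
  have "x ^ m * char_poly (A * mat_adjoint A) = x ^ m * char_poly (mat_adjoint A * A)"
    unfolding x_def by (rule sylvester[OF A adj_carrier[OF A]])
  hence s1: "char_poly (A * mat_adjoint A) = char_poly (mat_adjoint A * A)" using x0 mult_left_cancel by blast
  have YY: "mat_adjoint Y * Y \<in> carrier_mat m m" using Y by auto
  have YY': "Y * mat_adjoint Y \<in> carrier_mat s s" using Y by auto
  have s2: "char_poly (mat_adjoint A * A) = (-1) ^ m * pcompose (char_poly (mat_adjoint Y * Y)) qq"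
    unfolding AA by (rule char_poly_one_minus[OF YY])
  have s3: "char_poly (1\<^sub>m s - Y * mat_adjoint Y) = (-1) ^ s * pcompose (char_poly (Y * mat_adjoint Y)) qq"
    by (rule char_poly_one_minus[OF YY'])
  have s4: "x ^ m * char_poly (Y * mat_adjoint Y) = x ^ s * char_poly (mat_adjoint Y * Y)"
    unfolding x_def by (rule sylvester[OF Y adj_carrier[OF Y]])
  define f where "f = char_poly (Y * mat_adjoint Y)"
  define g where "g = char_poly (mat_adjoint Y * Y)"
  have f0: "f \<noteq> 0" unfolding f_def by (rule cp_nz[OF YY'])
  have g0: "g \<noteq> 0" unfolding g_def by (rule cp_nz[OF YY])
  have f0': "pcompose f qq \<noteq> 0" using f0 pcompose_qq_twice[of f] by auto
  have g0': "pcompose g qq \<noteq> 0" using g0 pcompose_qq_twice[of g] by auto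
  have o1: "Polynomial.order e (char_poly (mat_adjoint L' * M' * mat_adjoint M' * L')) = Polynomial.order (1 - e) f"
    unfolding C' s3 f_def[symmetric] order_neg_power[OF f0'] order_pcomp[OF f0] ..
  have o2: "Polynomial.order e (char_poly (mat_adjoint L * M * mat_adjoint M * L)) = Polynomial.order (1 - e) g"
    unfolding C s1 s2 g_def[symmetric] order_neg_power[OF g0'] order_pcomp[OF g0] ..
  have "Polynomial.order (1 - e) (x ^ m * f) = Polynomial.order (1 - e) (x ^ s * g)"
    using s4 unfolding f_def g_def by simp
  moreover have "Polynomial.order (1 - e) (x ^ m * f) = Polynomial.order (1 - e) (x ^ m) + Polynomial.order (1 - e) f"
    by (rule order_mult[OF no_zero_divisors[OF x0 f0]])
  moreover have "Polynomial.order (1 - e) (x ^ s * g) = Polynomial.order (1 - e) (x ^ s) + Polynomial.order (1 - e) g"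
    by (rule order_mult[OF no_zero_divisors[OF x0 g0]])
  moreover have "Polynomial.order (1 - e) (x ^ n) = (if 1 - e = 0 then n else 0)" for n
    unfolding x_def by (rule order_x_power)
  ultimately have o3: "Polynomial.order (1 - e) f + (if 1 - e = 0 then m else 0) = Polynomial.order (1 - e) g + (if 1 - e = 0 then s else 0)"
    by simp
  have "(1 - e = 0) = (e = 1)" by auto
  thus ?thesis using o1 o2 o3 by simp
qed



lemma basis_onb: assumes "subspace_dim k d V" shows "onb_mat k d V (basis_mat k d V)"
  using assms unfolding subspace_dim_def basis_mat_def by (rule someI_ex)

lemma trace_proj: fixes L :: "'a :: conjugatable_field mat"
  assumes L: "L \<in> carrier_mat k d" and LL: "mat_adjoint L * L = 1\<^sub>m d"
  shows "mat_trace (L * mat_adjoint L) = of_nat d"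
  using trace_comm[OF L adj_carrier[OF L]] LL by simp

lemma tr_cross: fixes L :: "'a :: conjugatable_field mat"
  assumes L: "L \<in> carrier_mat k d" and M: "M \<in> carrier_mat k d"
  shows "mat_trace (mat_adjoint L * M * mat_adjoint M * L) = mat_trace ((L * mat_adjoint L) * (M * mat_adjoint M))"
proof -
  have X: "mat_adjoint L * M * mat_adjoint M \<in> carrier_mat d k" using L M by auto
  have "mat_trace (mat_adjoint L * M * mat_adjoint M * L) = mat_trace (L * (mat_adjoint L * M * mat_adjoint M))"
    by (rule trace_comm[OF X L])
  also have "L * (mat_adjoint L * M * mat_adjoint M) = (L * mat_adjoint L) * (M * mat_adjoint M)"
  proof -
    have "L * (mat_adjoint L * M * mat_adjoint M) = L * (mat_adjoint L * (M * mat_adjoint M))"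
      using L M by (simp add: assoc_mult_mat[of _ d k _ d _ k])
    also have "\<dots> = (L * mat_adjoint L) * (M * mat_adjoint M)"
      by (rule assoc_mult_mat[symmetric, of L k d "mat_adjoint L" k "M * mat_adjoint M" k], insert L M, auto)
    finally show ?thesis .
  qed
  finally show ?thesis .
qed

lemma tr_one_minus: fixes P :: "'a :: comm_ring_1 mat"
  assumes P: "P \<in> carrier_mat k k" and Q: "Q \<in> carrier_mat k k"
  shows "mat_trace ((1\<^sub>m k - P) * (1\<^sub>m k - Q)) = of_nat k - mat_trace P - mat_trace Q + mat_trace (P * Q)"
proof -
  have "(1\<^sub>m k - P) * (1\<^sub>m k - Q) = (1\<^sub>m k - P) * 1\<^sub>m k - (1\<^sub>m k - P) * Q"
    by (rule mult_minus_distrib_mat, insert P Q, auto)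
  also have "(1\<^sub>m k - P) * 1\<^sub>m k = 1\<^sub>m k - P" using P by simp
  also have "(1\<^sub>m k - P) * Q = 1\<^sub>m k * Q - P * Q"
    by (rule minus_mult_distrib_mat, insert P Q, auto)
  also have "1\<^sub>m k * Q = Q" using Q by simp
  finally have e: "(1\<^sub>m k - P) * (1\<^sub>m k - Q) = (1\<^sub>m k - P) - (Q - P * Q)" .
  have PQ: "P * Q \<in> carrier_mat k k" using P Q by auto
  have "mat_trace ((1\<^sub>m k - P) - (Q - P * Q)) = mat_trace (1\<^sub>m k - P) - mat_trace (Q - P * Q)"
    by (rule trace_minus, insert P Q, auto)
  also have "mat_trace (1\<^sub>m k - P) = of_nat k - mat_trace P"
    using trace_minus[OF one_carrier_mat P] by simp
  also have "mat_trace (Q - P * Q) = mat_trace Q - mat_trace (P * Q)"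
    by (rule trace_minus[OF Q PQ])
  finally show ?thesis unfolding e by (simp add: algebra_simps)
qed



definition pos_hyp :: "'a :: conjugatable_ordered_field itself \<Rightarrow> nat \<Rightarrow> bool" where
  "pos_hyp TYPE('a) k \<longleftrightarrow> (\<forall>(A::'a) (d::nat) (n::nat). 0 < d \<longrightarrow> d < k \<longrightarrow> 0 < A \<longrightarrow>
      of_nat k * A = of_nat n * of_nat d \<longrightarrow> 0 < of_nat n - A)"

lemma tff_transfer: fixes Q Q' :: "nat \<Rightarrow> 'a :: conjugatable_ordered_field mat"
  assumes Qc: "\<forall>i\<in>{1..n}. Q i \<in> carrier_mat k k"
  and Q': "\<forall>i\<in>{1..n}. Q' i = 1\<^sub>m k - Q i"
  and tr: "\<forall>i\<in>{1..n}. mat_trace (Q i) = of_nat d"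
  and pos: "\<And>A. 0 < A \<Longrightarrow> of_nat k * A = of_nat n * of_nat d \<Longrightarrow> 0 < (of_nat n - A :: 'a)"
  and S: "mat k k (\<lambda>(a,b). \<Sum>i\<in>{1..n}. Q i $$ (a,b)) = A \<cdot>\<^sub>m 1\<^sub>m k" and A: "0 < A"
  shows "\<exists>A'. 0 < A' \<and> mat k k (\<lambda>(a,b). \<Sum>i\<in>{1..n}. Q' i $$ (a,b)) = A' \<cdot>\<^sub>m 1\<^sub>m k"
proof -
  have "mat_trace (mat k k (\<lambda>(a,b). \<Sum>i\<in>{1..n}. Q i $$ (a,b))) = (\<Sum>a<k. \<Sum>i\<in>{1..n}. Q i $$ (a,a))"
    unfolding mat_trace_def by simp
  also have "\<dots> = (\<Sum>i\<in>{1..n}. \<Sum>a<k. Q i $$ (a,a))" by (rule sum.swap)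
  also have "\<dots> = (\<Sum>i\<in>{1..n}. (of_nat d :: 'a))"
  proof (rule sum.cong[OF refl])
    fix i assume i: "i \<in> {1..n}"
    have "dim_row (Q i) = k" using Qc i by auto
    thus "(\<Sum>a<k. Q i $$ (a,a)) = of_nat d" using tr i unfolding mat_trace_def by auto
  qed
  also have "\<dots> = of_nat n * of_nat d" by simp
  finally have t1: "mat_trace (mat k k (\<lambda>(a,b). \<Sum>i\<in>{1..n}. Q i $$ (a,b))) = of_nat n * of_nat d" .
  have "mat_trace (A \<cdot>\<^sub>m 1\<^sub>m k) = of_nat k * A" unfolding mat_trace_def by simp
  with t1 S have kA: "of_nat k * A = of_nat n * of_nat d" by simp
  show ?thesis
  proof (intro exI conjI)
    show "0 < of_nat n - A" by (rule pos[OF A kA])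
    show "mat k k (\<lambda>(a,b). \<Sum>i\<in>{1..n}. Q' i $$ (a,b)) = (of_nat n - A) \<cdot>\<^sub>m 1\<^sub>m k"
    proof (rule eq_matI)
      fix a b assume "a < dim_row ((of_nat n - A) \<cdot>\<^sub>m 1\<^sub>m k)" "b < dim_col ((of_nat n - A) \<cdot>\<^sub>m (1\<^sub>m k :: 'a mat))"
      hence ab: "a < k" "b < k" by auto
      have "(\<Sum>i\<in>{1..n}. Q i $$ (a,b)) = (A \<cdot>\<^sub>m 1\<^sub>m k) $$ (a,b)"
        using arg_cong[OF S, of "\<lambda>X. X $$ (a,b)"] ab by simp
      hence sQ: "(\<Sum>i\<in>{1..n}. Q i $$ (a,b)) = (if a = b then A else 0)" using ab by simp
      have "(\<Sum>i\<in>{1..n}. Q' i $$ (a,b)) = (\<Sum>i\<in>{1..n}. (if a = b then 1 else 0) - Q i $$ (a,b))"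
      proof (rule sum.cong[OF refl])
        fix i assume i: "i \<in> {1..n}"
        have "Q i \<in> carrier_mat k k" using Qc i by auto
        thus "Q' i $$ (a,b) = (if a = b then 1 else 0) - Q i $$ (a,b)" using Q' i ab by auto
      qed
      also have "\<dots> = of_nat n * (if a = b then 1 else 0) - (\<Sum>i\<in>{1..n}. Q i $$ (a,b))"
        by (simp add: sum_subtractf)
      finally show "mat k k (\<lambda>(a,b). \<Sum>i\<in>{1..n}. Q' i $$ (a,b)) $$ (a,b) = ((of_nat n - A) \<cdot>\<^sub>m 1\<^sub>m k) $$ (a,b)"
        using ab sQ by simp
    qed auto
  qed
qed



lemma main_generic: fixes W :: "nat \<Rightarrow> 'a :: conjugatable_ordered_field vec set"
  assumes sq: "sqrt_hyp TYPE('a)" and ph: "pos_hyp TYPE('a) k" and m0: "0 < m" and mk: "m < k"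
  and sub: "\<forall>i\<in>{1..n}. subspace_dim k m (W i)"
  shows "complement_duality Z k m n W"
proof -
  define W' where "W' = (\<lambda>i. perp k (W i))"
  define L where "L = (\<lambda>i. basis_mat k m (W i))"
  define L' where "L' = (\<lambda>i. basis_mat k (k - m) (W' i))"
  have oL: "onb_mat k m (W i) (L i)" if "i \<in> {1..n}" for i
    unfolding L_def by (rule basis_onb, insert sub that, auto)
  have sub': "subspace_dim k (k - m) (W' i)" if "i \<in> {1..n}" for i
    unfolding subspace_dim_def W'_def using perp_onb_exists[OF sq oL[OF that]] mk by auto
  have oL': "onb_mat k (k - m) (W' i) (L' i)" if "i \<in> {1..n}" for i
    unfolding L'_def by (rule basis_onb, rule sub'[OF that])
  have Lc: "L i \<in> carrier_mat k m" and LL: "mat_adjoint (L i) * L i = 1\<^sub>m m" if "i \<in> {1..n}" for i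
    using onbD[OF oL[OF that]] by auto
  have L'c: "L' i \<in> carrier_mat k (k - m)" and L'L': "mat_adjoint (L' i) * L' i = 1\<^sub>m (k - m)" if "i \<in> {1..n}" for i
    using onbD[OF oL'[OF that]] by auto
  have PL: "L i * mat_adjoint (L i) + L' i * mat_adjoint (L' i) = 1\<^sub>m k" if "i \<in> {1..n}" for i
    using proj_sum(1)[OF oL[OF that] oL'[OF that, unfolded W'_def]] .
  have bL: "basis_mat k m (W i) = L i" for i unfolding L_def ..
  have bL': "basis_mat k (k - m) (W' i) = L' i" for i unfolding L'_def ..
  define P where "P = (\<lambda>i. L i * mat_adjoint (L i))"
  define P' where "P' = (\<lambda>i. L' i * mat_adjoint (L' i))"
  have projP: "proj_mat k m (W i) = P i" for i unfolding proj_mat_def P_def L_def ..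
  have projP': "proj_mat k (k - m) (W' i) = P' i" for i unfolding proj_mat_def P'_def L'_def ..
  have Pc: "P i \<in> carrier_mat k k" if "i \<in> {1..n}" for i unfolding P_def using Lc[OF that] by auto
  have P'c: "P' i \<in> carrier_mat k k" if "i \<in> {1..n}" for i unfolding P'_def using L'c[OF that] by auto
  have P'eq: "P' i = 1\<^sub>m k - P i" if i: "i \<in> {1..n}" for i
  proof (rule eq_matI)
    fix a b assume "a < dim_row (1\<^sub>m k - P i)" "b < dim_col (1\<^sub>m k - P i)"
    hence ab: "a < k" "b < k" using Pc[OF i] by auto
    have "(P i + P' i) $$ (a,b) = 1\<^sub>m k $$ (a,b)" using PL[OF i] unfolding P_def P'_def by simp
    hence "P i $$ (a,b) + P' i $$ (a,b) = (if a = b then 1 else 0)" using ab Pc[OF i] P'c[OF i] by simp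
    hence "P' i $$ (a,b) = (if a = b then 1 else 0) - P i $$ (a,b)" by (simp add: eq_diff_eq add.commute)
    thus "P' i $$ (a,b) = (1\<^sub>m k - P i) $$ (a,b)" using ab Pc[OF i] by simp
  qed (use Pc[OF i] P'c[OF i] in auto)
  have Peq: "P i = 1\<^sub>m k - P' i" if i: "i \<in> {1..n}" for i
  proof (rule eq_matI)
    fix a b assume "a < dim_row (1\<^sub>m k - P' i)" "b < dim_col (1\<^sub>m k - P' i)"
    hence ab: "a < k" "b < k" using P'c[OF i] by auto
    have "(P i + P' i) $$ (a,b) = 1\<^sub>m k $$ (a,b)" using PL[OF i] unfolding P_def P'_def by simp
    hence "P i $$ (a,b) + P' i $$ (a,b) = (if a = b then 1 else 0)" using ab Pc[OF i] P'c[OF i] by simp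
    hence "P i $$ (a,b) = (if a = b then 1 else 0) - P' i $$ (a,b)" by (simp add: eq_diff_eq)
    thus "P i $$ (a,b) = (1\<^sub>m k - P' i) $$ (a,b)" using ab P'c[OF i] by simp
  qed (use Pc[OF i] P'c[OF i] in auto)
  have trP: "mat_trace (P i) = of_nat m" if "i \<in> {1..n}" for i
    unfolding P_def by (rule trace_proj[OF Lc[OF that] LL[OF that]])
  have trP': "mat_trace (P' i) = of_nat (k - m)" if "i \<in> {1..n}" for i
    unfolding P'_def by (rule trace_proj[OF L'c[OF that] L'L'[OF that]])
  have crossP: "mat_trace (cross_mat k m (W i) (W j)) = mat_trace (P i * P j)" if "i \<in> {1..n}" "j \<in> {1..n}" for i j
    unfolding cross_mat_def bL P_def by (rule tr_cross[OF Lc[OF that(1)] Lc[OF that(2)]])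
  have crossP': "mat_trace (cross_mat k (k - m) (W' i) (W' j)) = mat_trace (P' i * P' j)" if "i \<in> {1..n}" "j \<in> {1..n}" for i j
    unfolding cross_mat_def bL' P'_def by (rule tr_cross[OF L'c[OF that(1)] L'c[OF that(2)]])
  have ofk: "(of_nat (k - m) :: 'a) = of_nat k - of_nat m" using mk by (simp add: of_nat_diff)
  have tr2: "mat_trace (P' i * P' j) = of_nat k - of_nat m - of_nat m + mat_trace (P i * P j)"
    if i: "i \<in> {1..n}" and j: "j \<in> {1..n}" for i j
    unfolding P'eq[OF i] P'eq[OF j] tr_one_minus[OF Pc[OF i] Pc[OF j]] trP[OF i] trP[OF j] ..
  have cross: "mat_trace (cross_mat k (k - m) (W' i) (W' j)) = (of_nat k - of_nat m - of_nat m) + mat_trace (cross_mat k m (W i) (W j))"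
    if i: "i \<in> {1..n}" and j: "j \<in> {1..n}" for i j
    unfolding crossP'[OF i j] crossP[OF i j] tr2[OF i j] by simp
  have chord: "chordal_sq k (k - m) (W' i) (W' j) = chordal_sq k m (W i) (W j)"
    if i: "i \<in> {1..n}" and j: "j \<in> {1..n}" for i j
    unfolding chordal_sq_def projP projP' tr2[OF i j] ofk by (simp add: algebra_simps)
  have ords: "Polynomial.order e (char_poly (cross_mat k (k - m) (W' i) (W' j))) + (if e = 1 then m else 0)
      = Polynomial.order e (char_poly (cross_mat k m (W i) (W j))) + (if e = 1 then k - m else 0)"
    if i: "i \<in> {1..n}" and j: "j \<in> {1..n}" for i j e
    unfolding cross_mat_def bL bL'
    by (rule pair_orders[OF Lc[OF i] Lc[OF j] L'c[OF i] L'c[OF j] L'L'[OF i] LL[OF j] PL[OF i] PL[OF j]])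
  have pos1: "\<And>A. 0 < A \<Longrightarrow> of_nat k * A = of_nat n * of_nat m \<Longrightarrow> 0 < (of_nat n - A :: 'a)"
    using ph[unfolded pos_hyp_def, rule_format, of m] m0 mk by blast
  have pos2: "\<And>A. 0 < A \<Longrightarrow> of_nat k * A = of_nat n * of_nat (k - m) \<Longrightarrow> 0 < (of_nat n - A :: 'a)"
  proof -
    fix A :: 'a assume "0 < A" "of_nat k * A = of_nat n * of_nat (k - m)"
    moreover have "0 < k - m" "k - m < k" using m0 mk by auto
    ultimately show "0 < (of_nat n - A :: 'a)" using ph[unfolded pos_hyp_def, rule_format, of "k - m" A n] by blast
  qed
  have tff: "tight_fusion_frame k m n W \<longleftrightarrow> tight_fusion_frame k (k - m) n W'"
  proof
    assume "tight_fusion_frame k m n W"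
    then obtain A where A: "0 < A" and S: "mat k k (\<lambda>(a,b). \<Sum>i\<in>{1..n}. P i $$ (a,b)) = A \<cdot>\<^sub>m 1\<^sub>m k"
      unfolding tight_fusion_frame_def projP by auto
    from tff_transfer[of n P k P' m, OF _ _ _ pos1 S A] Pc P'eq trP
    show "tight_fusion_frame k (k - m) n W'" unfolding tight_fusion_frame_def projP' by blast
  next
    assume "tight_fusion_frame k (k - m) n W'"
    then obtain A where A: "0 < A" and S: "mat k k (\<lambda>(a,b). \<Sum>i\<in>{1..n}. P' i $$ (a,b)) = A \<cdot>\<^sub>m 1\<^sub>m k"
      unfolding tight_fusion_frame_def projP' by auto
    from tff_transfer[of n P' k P "k - m", OF _ _ _ pos2 S A] P'c Peq trP'
    show "tight_fusion_frame k m n W" unfolding tight_fusion_frame_def projP by blast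
  qed
  have eqc: "equichordal k m n W \<longleftrightarrow> equichordal k (k - m) n W'"
  proof
    assume "equichordal k m n W"
    then obtain c where c: "\<forall>i\<in>{1..n}. \<forall>j\<in>{1..n}. i \<noteq> j \<longrightarrow> mat_trace (cross_mat k m (W i) (W j)) = c"
      unfolding equichordal_def by blast
    show "equichordal k (k - m) n W'" unfolding equichordal_def
    proof (intro exI ballI impI)
      fix i j assume i: "i \<in> {1..n}" and j: "j \<in> {1..n}" and ij: "i \<noteq> j"
      show "mat_trace (cross_mat k (k - m) (W' i) (W' j)) = (of_nat k - of_nat m - of_nat m) + c"
        unfolding cross[OF i j] using c i j ij by simp
    qed
  next
    assume "equichordal k (k - m) n W'"
    then obtain c where c: "\<forall>i\<in>{1..n}. \<forall>j\<in>{1..n}. i \<noteq> j \<longrightarrow> mat_trace (cross_mat k (k - m) (W' i) (W' j)) = c"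
      unfolding equichordal_def by blast
    show "equichordal k m n W" unfolding equichordal_def
    proof (intro exI ballI impI)
      fix i j assume i: "i \<in> {1..n}" and j: "j \<in> {1..n}" and ij: "i \<noteq> j"
      have "(of_nat k - of_nat m - of_nat m) + mat_trace (cross_mat k m (W i) (W j)) = c"
        unfolding cross[OF i j, symmetric] using c i j ij by simp
      thus "mat_trace (cross_mat k m (W i) (W j)) = c - (of_nat k - of_nat m - of_nat m)"
        by (simp add: eq_diff_eq add.commute)
    qed
  qed
  have cancel_aux: "(a'::nat) + x = a + y \<Longrightarrow> b' + x = b + y \<Longrightarrow> (a' = b') = (a = b)" for a' a b' b x y
    by arith
  have sse: "same_eigenvalues (cross_mat k (k - m) (W' i) (W' j)) (cross_mat k (k - m) (W' i') (W' j'))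
     \<longleftrightarrow> same_eigenvalues (cross_mat k m (W i) (W j)) (cross_mat k m (W i') (W j'))"
    if "i \<in> {1..n}" "j \<in> {1..n}" "i' \<in> {1..n}" "j' \<in> {1..n}" for i j i' j'
  proof -
    have "(Polynomial.order e (char_poly (cross_mat k (k - m) (W' i) (W' j))) =
           Polynomial.order e (char_poly (cross_mat k (k - m) (W' i') (W' j')))) =
          (Polynomial.order e (char_poly (cross_mat k m (W i) (W j))) =
           Polynomial.order e (char_poly (cross_mat k m (W i') (W j'))))" for e
      by (rule cancel_aux[OF ords[OF that(1,2)] ords[OF that(3,4)]])
    thus ?thesis unfolding same_eigenvalues_def by simp
  qed
  have ss: "strongly_simplicial k m n W \<longleftrightarrow> strongly_simplicial k (k - m) n W'"
  proof
    assume h: "strongly_simplicial k m n W"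
    show "strongly_simplicial k (k - m) n W'" unfolding strongly_simplicial_def
    proof (intro ballI impI)
      fix i j i' j' assume "i \<in> {1..n}" "j \<in> {1..n}" "i' \<in> {1..n}" "j' \<in> {1..n}" "i \<noteq> j" "i' \<noteq> j'"
      thus "same_eigenvalues (cross_mat k (k - m) (W' i) (W' j)) (cross_mat k (k - m) (W' i') (W' j'))"
        using sse h unfolding strongly_simplicial_def by blast
    qed
  next
    assume h: "strongly_simplicial k (k - m) n W'"
    show "strongly_simplicial k m n W" unfolding strongly_simplicial_def
    proof (intro ballI impI)
      fix i j i' j' assume "i \<in> {1..n}" "j \<in> {1..n}" "i' \<in> {1..n}" "j' \<in> {1..n}" "i \<noteq> j" "i' \<noteq> j'"
      thus "same_eigenvalues (cross_mat k m (W i) (W j)) (cross_mat k m (W i') (W j'))"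
        using sse h unfolding strongly_simplicial_def by blast
    qed
  qed
  have cc: "(of_nat ((k - m) * (k - (k - m))) / of_nat k :: 'a) = of_nat (m * (k - m)) / of_nat k"
    using mk by (simp add: mult.commute)
  define c where "c = (of_nat (m * (k - m)) / of_nat k :: 'a)"
  have A1: "(\<forall>i\<in>{1..n}. \<forall>j\<in>{1..n}. i \<noteq> j \<longrightarrow> c \<le> chordal_sq k m (W i) (W j)) \<longleftrightarrow>
            (\<forall>i\<in>{1..n}. \<forall>j\<in>{1..n}. i \<noteq> j \<longrightarrow> c \<le> chordal_sq k (k - m) (W' i) (W' j))"
    using chord by auto
  have A2: "(\<exists>i\<in>{1..n}. \<exists>j\<in>{1..n}. i \<noteq> j \<and> chordal_sq k m (W i) (W j) = c) \<longleftrightarrow>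
            (\<exists>i\<in>{1..n}. \<exists>j\<in>{1..n}. i \<noteq> j \<and> chordal_sq k (k - m) (W' i) (W' j) = c)"
    using chord by auto
  have op: "orthoplectic_packing Z k m n W \<longleftrightarrow> orthoplectic_packing Z k (k - m) n W'"
    unfolding orthoplectic_packing_def Let_def cc c_def[symmetric] using A1 A2 by simp
  have s1: "\<forall>i\<in>{1..n}. subspace_dim k (k - m) (W' i)" using sub' by blast
  show ?thesis unfolding complement_duality_def Let_def W'_def[symmetric]
    using s1 tff eqc ss op by simp
qed



lemma sqrt_real: "sqrt_hyp TYPE(real)"
  unfolding sqrt_hyp_def
proof (intro allI impI)
  fix x :: real assume x: "0 < x"
  show "\<exists>r. r * conjugate r * x = 1"
    by (rule exI[of _ "1 / sqrt x"], insert x, simp add: field_simps)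
qed

lemma sqrt_complex: "sqrt_hyp TYPE(complex)"
  unfolding sqrt_hyp_def
proof (intro allI impI)
  fix x :: complex assume x: "0 < x"
  hence re: "0 < Re x" and im: "Im x = 0" by (auto simp: less_complex_def)
  define y where "y = Re x"
  have y: "0 < y" unfolding y_def using re .
  have xe: "x = complex_of_real y" unfolding y_def using im by (simp add: complex_eq_iff)
  show "\<exists>r. r * conjugate r * x = 1"
  proof (rule exI[of _ "complex_of_real (1 / sqrt y)"])
    have "complex_of_real (1 / sqrt y) * conjugate (complex_of_real (1 / sqrt y)) * complex_of_real y
      = complex_of_real (1 / sqrt y * (1 / sqrt y) * y)"
      by (simp only: conjugate_complex_def complex_cnj_complex_of_real of_real_mult)
    also have "1 / sqrt y * (1 / sqrt y) * y = 1" using y by (simp add: field_simps)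
    finally show "complex_of_real (1 / sqrt y) * conjugate (complex_of_real (1 / sqrt y)) * x = 1"
      unfolding xe by simp
  qed
qed

lemma pos_real_aux: fixes A :: real and d n k :: nat
  assumes d: "0 < d" "d < k" and A: "0 < A" and e: "real k * A = real n * real d"
  shows "0 < real n - A"
proof -
  have n: "0 < n"
  proof (rule ccontr)
    assume "\<not> 0 < n" hence "n = 0" by simp
    with e have "real k * A = 0" by simp
    with A d show False by simp
  qed
  have "real k * (real n - A) = real n * (real k - real d)" using e by (simp add: algebra_simps)
  moreover have "0 < real n * (real k - real d)" using n d by simp
  ultimately have "0 < real k * (real n - A)" by simp
  thus ?thesis using d by (simp add: zero_less_mult_iff)
qed

lemma pos_real: "pos_hyp TYPE(real) k"
  unfolding pos_hyp_def using pos_real_aux by auto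

lemma pos_complex: "pos_hyp TYPE(complex) k"
  unfolding pos_hyp_def
proof (intro allI impI)
  fix A :: complex and d n :: nat
  assume d: "0 < d" "d < k" and A: "0 < A" and e: "of_nat k * A = of_nat n * of_nat d"
  from A have re: "0 < Re A" and im: "Im A = 0" by (auto simp: less_complex_def)
  from arg_cong[OF e, of Re] have "real k * Re A = real n * real d" by simp
  from pos_real_aux[OF d re this] have "0 < real n - Re A" .
  thus "0 < of_nat n - A" using im by (simp add: less_complex_def)
qed

theorem mainTheorem8:
  fixes k m n :: nat
  assumes "0 < m" and "m < k"
  shows "(\<forall>W :: nat \<Rightarrow> real vec set. (\<forall>i\<in>{1..n}. subspace_dim k m (W i)) \<longrightarrow>
            complement_duality (k * (k + 1) div 2) k m n W)
       \<and> (\<forall>W :: nat \<Rightarrow> complex vec set. (\<forall>i\<in>{1..n}. subspace_dim k m (W i)) \<longrightarrow>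
            complement_duality (k ^ 2) k m n W)"
  using main_generic[OF sqrt_real pos_real assms] main_generic[OF sqrt_complex pos_complex assms] by blast

end
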